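(* Let $s\ge r\ge 2$, let $Q$ be an $s$-vertex $r$-graph and let $H$ be an $n$-vertex $r$-graph ($n\ge s$) with $\mathcal N(Q,H)>0$. Then the function $$f_{Q,H}(p)=\left(\frac{\lambda^{(p)}(Q,H)}{s!\,\mathcal N(Q,H)}\right)^{p}$$ is non-increasing on $[1,\infty)$.
   Context: An $r$-graph ($r\ge 2$) is a finite hypergraph all of whose edges have exactly $r$ vertices. For $I\subseteq V(H)$, $H[I]$ denotes the induced subhypergraph on $I$. For an $s$-vertex $r$-graph $Q$ and an $r$-graph $H$, $\mathcal N(Q,H)$ is the number of (not necessarily induced) subgraphs of $H$ isomorphic to $Q$. For an $n$-vertex $r$-graph $H$ with vertex set $[n]$ and $\mathbf x\in\mathbb R^n$, $P_{Q,H}(\mathbf x)=s!\sum_{\{i_1,\dots,i_s\}\in\binom{[n]}{s}}\mathcal N(Q,H[\{i_1,\dots,i_s\}])\,x_{i_1}\cdots x_{i_s}$, and for $p\ge1$, $\lambda^{(p)}(Q,H)=\max_{\|\mathbf x\|_p=1}P_{Q,H}(\mathbf x)$. *)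

theory Defs
  imports "HOL-Analysis.Analysis"
begin

definition is_rgraph :: "nat \<Rightarrow> nat set \<Rightarrow> nat set set \<Rightarrow> bool" where
  "is_rgraph r V E \<longleftrightarrow> finite V \<and> (\<forall>e\<in>E. e \<subseteq> V \<and> card e = r)"

definition num_copies :: "nat set \<Rightarrow> nat set set \<Rightarrow> nat set \<Rightarrow> nat set set \<Rightarrow> nat" where
  "num_copies VQ EQ0 VH EH = card {(V', E'). V' \<subseteq> VH \<and> E' \<subseteq> EH \<and> (\<forall>e\<in>E'. e \<subseteq> V') \<and>
       (\<exists>f. bij_betw f V' VQ \<and> (image f) ` E' = EQ0)}"

definition induced_edges :: "nat set set \<Rightarrow> nat set \<Rightarrow> nat set set" where
  "induced_edges EH I = {e \<in> EH. e \<subseteq> I}"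

definition PQH :: "nat \<Rightarrow> nat set set \<Rightarrow> nat \<Rightarrow> nat set set \<Rightarrow> (nat \<Rightarrow> real) \<Rightarrow> real" where
  "PQH s EQ0 n EH x = fact s * (\<Sum>I \<in> {I. I \<subseteq> {0..<n} \<and> card I = s}.
      real (num_copies {0..<s} EQ0 I (induced_edges EH I)) * (\<Prod>i\<in>I. x i))"

definition pnorm :: "real \<Rightarrow> nat \<Rightarrow> (nat \<Rightarrow> real) \<Rightarrow> real" where
  "pnorm p n x = (\<Sum>i<n. \<bar>x i\<bar> powr p) powr (1 / p)"

text \<open>lambda^(p)(Q,H) = max over ||x||_p = 1 of P_{Q,H}(x) (the max is attained; Sup).\<close>
definition lambda_p :: "real \<Rightarrow> nat \<Rightarrow> nat set set \<Rightarrow> nat \<Rightarrow> nat set set \<Rightarrow> real" where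
  "lambda_p p s EQ0 n EH = (SUP x \<in> {x :: nat \<Rightarrow> real. pnorm p n x = 1}. PQH s EQ0 n EH x)"

end

theory Submission
  imports Defs
begin

lemma bern:
  fixes u t :: real assumes "0 \<le> u" "1 \<le> t"
  shows "1 + t * (u - 1) \<le> u powr t"
proof (cases "u = 0")
  case True then show ?thesis using assms by simp
next
  case False
  hence u: "0 < u" using assms by simp
  define g where "g = (\<lambda>x::real. x powr t - t * x)"
  have der: "DERIV g x :> t * x powr (t - 1) - t" if "0 < x" for x
    unfolding g_def using that
    by (auto intro!: derivative_eq_intros)
  have cont: "continuous_on {a..b} g" if "0 < a" for a b
    unfolding g_def using that
    by (intro continuous_intros) auto
  have "g 1 \<le> g u"
  proof (cases "1 \<le> u")
    case True
    show ?thesis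
    proof (rule DERIV_nonneg_imp_increasing_open[OF True _ cont])
      fix x assume "1 < x" "x < u"
      moreover have "1 \<le> x powr (t - 1)" using \<open>1 < x\<close> assms by (simp add: ge_one_powr_ge_zero)
      ultimately show "\<exists>y. DERIV g x :> y \<and> 0 \<le> y" using der assms by (intro exI[of _ "t * x powr (t - 1) - t"]) auto
    qed simp
  next
    case False
    show ?thesis
    proof (rule DERIV_nonpos_imp_decreasing_open[of u 1, OF _ _ cont[OF u]])
      fix x assume "u < x" "x < 1"
      moreover have "x powr (t - 1) \<le> 1" using \<open>u < x\<close> \<open>x < 1\<close> u assms by (simp add: powr_le1)
      ultimately show "\<exists>y. DERIV g x :> y \<and> y \<le> 0" using der assms u by (intro exI[of _ "t * x powr (t - 1) - t"]) auto
    qed (use False in auto)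
  qed
  then show ?thesis unfolding g_def by (simp add: algebra_simps)
qed

lemma jensen_sub:
  fixes w a :: "'a \<Rightarrow> real" and t :: real
  assumes S: "finite S" and w: "\<And>i. i \<in> S \<Longrightarrow> 0 \<le> w i" and W: "sum w S \<le> 1"
    and a: "\<And>i. i \<in> S \<Longrightarrow> 0 \<le> a i" and t: "1 \<le> t"
  shows "(\<Sum>i\<in>S. w i * a i) powr t \<le> (\<Sum>i\<in>S. w i * a i powr t)"
proof -
  define m where "m = (\<Sum>i\<in>S. w i * a i)"
  have m0: "0 \<le> m" unfolding m_def using w a by (intro sum_nonneg) auto
  show ?thesis
  proof (cases "m = 0")
    case True
    then show ?thesis using w by (simp add: m_def[symmetric] sum_nonneg)
  next
    case False
    hence mp: "0 < m" using m0 by simp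
    have tan: "m powr t + t * m powr t * (a i / m - 1) \<le> a i powr t" if "i \<in> S" for i
    proof -
      have "1 + t * (a i / m - 1) \<le> (a i / m) powr t" using bern[of "a i / m" t] a[OF that] mp t by simp
      hence "m powr t * (1 + t * (a i / m - 1)) \<le> m powr t * (a i / m) powr t"
        by (intro mult_left_mono) auto
      also have "\<dots> = a i powr t" using mp a[OF that] by (simp add: powr_divide)
      finally show ?thesis by (simp add: algebra_simps)
    qed
    have "(\<Sum>i\<in>S. w i * (m powr t + t * m powr t * (a i / m - 1))) \<le> (\<Sum>i\<in>S. w i * a i powr t)"
      using tan w by (intro sum_mono mult_left_mono) auto
    moreover have "(\<Sum>i\<in>S. w i * (m powr t + t * m powr t * (a i / m - 1)))
       = m powr t * (sum w S) + t * m powr t * ((\<Sum>i\<in>S. w i * a i) / m - sum w S)"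
      by (simp add: algebra_simps sum.distrib sum_distrib_left sum_subtractf sum_divide_distrib sum_distrib_right[symmetric]) (simp add: sum_distrib_left sum_distrib_right mult.assoc)
    moreover have "(\<Sum>i\<in>S. w i * a i) / m = 1" using mp unfolding m_def by simp
    moreover have "m powr t \<le> m powr t * (sum w S) + t * m powr t * (1 - sum w S)"
    proof -
      have "m powr t * (1 - sum w S) \<le> t * m powr t * (1 - sum w S)"
        using t W by (intro mult_right_mono) (auto intro: mult_right_mono[of 1 t, simplified])
      then show ?thesis by (simp add: algebra_simps)
    qed
    ultimately have "m powr t \<le> (\<Sum>i\<in>S. w i * a i powr t)" by (simp only:)
    then show ?thesis unfolding m_def .
  qed
qed


lemma pnorm_one:
  assumes "pnorm p n x = 1" "0 < p"
  shows "(\<Sum>i<n. \<bar>x i\<bar> powr p) = 1" "\<And>i. i < n \<Longrightarrow> \<bar>x i\<bar> \<le> 1"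
proof -
  define S where "S = (\<Sum>i<n. \<bar>x i\<bar> powr p)"
  have S0: "0 \<le> S" unfolding S_def by (intro sum_nonneg) auto
  have "S powr (1/p) = 1" using assms unfolding pnorm_def S_def by simp
  hence "(S powr (1/p)) powr p = 1" by simp
  hence "S = 1" using S0 assms by (simp add: powr_powr)
  thus S1: "(\<Sum>i<n. \<bar>x i\<bar> powr p) = 1" unfolding S_def .
  fix i assume "i < n"
  hence "\<bar>x i\<bar> powr p \<le> 1" using S1
    by (metis finite_lessThan lessThan_iff member_le_sum powr_ge_zero)
  show "\<bar>x i\<bar> \<le> 1"
  proof (rule ccontr)
    assume "\<not> \<bar>x i\<bar> \<le> 1"
    hence "1 powr p < \<bar>x i\<bar> powr p" using assms(2) by (intro powr_less_mono2) auto
    thus False using \<open>\<bar>x i\<bar> powr p \<le> 1\<close> by simp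
  qed
qed

lemma fin_I: "finite {I. I \<subseteq> {0..<(n::nat)} \<and> card I = s}"
  by (rule finite_subset[of _ "Pow {0..<n}"]) auto

lemma PQH_abs: "PQH s EQ0 n EH x \<le> PQH s EQ0 n EH (\<lambda>i. \<bar>x i\<bar>)"
  unfolding PQH_def
  by (intro mult_left_mono sum_mono) (auto simp: abs_prod[symmetric] intro!: mult_left_mono)

lemma PQH_bound:
  assumes "pnorm p n x = 1" "0 < p"
  shows "PQH s EQ0 n EH x \<le> fact s * (\<Sum>I \<in> {I. I \<subseteq> {0..<n} \<and> card I = s}.
      real (num_copies {0..<s} EQ0 I (induced_edges EH I)))"
  unfolding PQH_def
proof (intro mult_left_mono sum_mono)
  fix I assume "I \<in> {I. I \<subseteq> {0..<n} \<and> card I = s}"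
  hence "\<bar>\<Prod>i\<in>I. x i\<bar> \<le> 1" using pnorm_one(2)[OF assms]
    by (auto simp: abs_prod intro!: prod_le_1)
  thus "real (num_copies {0..<s} EQ0 I (induced_edges EH I)) * (\<Prod>i\<in>I. x i)
      \<le> real (num_copies {0..<s} EQ0 I (induced_edges EH I))"
    by (metis abs_le_D1 mult.right_neutral mult_left_mono of_nat_0_le_iff)
qed simp

lemma bdd: "0 < p \<Longrightarrow> bdd_above ((PQH s EQ0 n EH) ` {x. pnorm p n x = 1})"
  using PQH_bound by (intro bdd_aboveI2) auto

definition e0 :: "nat \<Rightarrow> real" where "e0 = (\<lambda>i. if i = 0 then 1 else 0)"

lemma e0_norm: "0 < p \<Longrightarrow> 0 < n \<Longrightarrow> pnorm p n e0 = 1"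
proof -
  assume "0 < p" "0 < n"
  have "(\<Sum>i<n. \<bar>e0 i\<bar> powr p) = (\<Sum>i\<in>{0}. \<bar>e0 i\<bar> powr p)"
    by (rule sum.mono_neutral_right) (use \<open>0 < n\<close> in \<open>auto simp: e0_def\<close>)
  thus ?thesis unfolding pnorm_def by (simp add: e0_def)
qed

lemma e0_P: "2 \<le> s \<Longrightarrow> PQH s EQ0 n EH e0 = 0"
  unfolding PQH_def
proof -
  assume s: "2 \<le> s"
  have "(\<Prod>i\<in>I. e0 i) = 0" if "card I = s" for I
  proof -
    have "finite I" using that s by (metis card.infinite not_numeral_le_zero)
    have "\<not> I \<subseteq> {0}"
      using that s by (metis card.empty card_mono finite.emptyI finite_insert insert_absorb2 is_singletonI is_singleton_altdef not_numeral_le_zero one_le_numeral order.trans subset_singletonD  card_1_singleton_iff numeral_le_one_iff semiring_norm(69))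
    then obtain i where "i \<in> I" "i \<noteq> 0" by auto
    thus ?thesis using \<open>finite I\<close> by (intro prod_zero) (auto simp: e0_def)
  qed
  thus "fact s * (\<Sum>I\<in>{I. I \<subseteq> {0..<n} \<and> card I = s}. real (num_copies {0..<s} EQ0 I (induced_edges EH I)) * prod e0 I) = 0"
    by simp
qed

lemma lambda_nonneg:
  assumes "0 < p" "2 \<le> s" "s \<le> n"
  shows "0 \<le> lambda_p p s EQ0 n EH"
proof -
  have "PQH s EQ0 n EH e0 \<le> lambda_p p s EQ0 n EH"
    unfolding lambda_p_def using assms e0_norm[of p n]
    by (intro cSUP_upper bdd) auto
  thus ?thesis using e0_P[OF assms(2)] by simp
qed

lemma sum_copies:
  assumes "num_copies {0..<s} EQ0 {0..<n} EH > 0"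
  shows "(\<Sum>I \<in> {I. I \<subseteq> {0..<n} \<and> card I = s}.
      real (num_copies {0..<s} EQ0 I (induced_edges EH I))) \<le> real (num_copies {0..<s} EQ0 {0..<n} EH)"
proof -
  define A where "A = (\<lambda>(VH::nat set) (EH::nat set set). {(V', E'). V' \<subseteq> VH \<and> E' \<subseteq> EH \<and> (\<forall>e\<in>E'. e \<subseteq> V') \<and>
       (\<exists>f. bij_betw f V' {0..<s} \<and> (image f) ` E' = EQ0)})"
  have nc: "num_copies {0..<s} EQ0 VH E = card (A VH E)" for VH E unfolding num_copies_def A_def by simp
  define T where "T = A {0..<n} EH"
  have finT: "finite T" using assms unfolding T_def nc by (metis card_gt_0_iff)
  define II where "II = {I. I \<subseteq> {0..<n} \<and> card I = s}"
  have sub: "A I (induced_edges EH I) \<subseteq> T" if "I \<in> II" for I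
    using that unfolding T_def A_def II_def induced_edges_def by auto
  have fst: "V = I" if "I \<in> II" "(V, E) \<in> A I (induced_edges EH I)" for I V E
  proof -
    from that obtain f where "bij_betw f V {0..<s}" "V \<subseteq> I" unfolding A_def by auto
    hence "card V = s" by (simp add: bij_betw_same_card)
    moreover have "finite I" using that(1) unfolding II_def by (auto intro: finite_subset)
    ultimately show ?thesis using \<open>V \<subseteq> I\<close> that(1) unfolding II_def by (simp add: card_subset_eq)
  qed
  have "(\<Sum>I\<in>II. card (A I (induced_edges EH I))) = card (\<Union>I\<in>II. A I (induced_edges EH I))"
  proof (rule card_UN_disjoint[symmetric])
    show "finite II" unfolding II_def by (rule fin_I)
    show "\<forall>i\<in>II. finite (A i (induced_edges EH i))" using sub finT by (meson finite_subset)
    show "\<forall>i\<in>II. \<forall>j\<in>II. i \<noteq> j \<longrightarrow> A i (induced_edges EH i) \<inter> A j (induced_edges EH j) = {}"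
    proof (intro ballI impI)
      fix i j assume ij: "i \<in> II" "j \<in> II" "i \<noteq> j"
      show "A i (induced_edges EH i) \<inter> A j (induced_edges EH j) = {}"
      proof (rule equals0I)
        fix z assume z: "z \<in> A i (induced_edges EH i) \<inter> A j (induced_edges EH j)"
        obtain V E where "z = (V, E)" by fastforce
        then show False using fst[of i V E] fst[of j V E] ij z by auto
      qed
    qed
  qed
  also have "\<dots> \<le> card T" using sub finT by (intro card_mono) auto
  finally have "(\<Sum>I\<in>II. num_copies {0..<s} EQ0 I (induced_edges EH I)) \<le> num_copies {0..<s} EQ0 {0..<n} EH"
    unfolding nc T_def .
  hence "real (\<Sum>I\<in>II. num_copies {0..<s} EQ0 I (induced_edges EH I)) \<le> real (num_copies {0..<s} EQ0 {0..<n} EH)"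
    by linarith
  thus ?thesis unfolding II_def by simp
qed

theorem lemma2p2:
  fixes r s n :: nat and EQ0 EH :: "nat set set"
  assumes "2 \<le> r" and "r \<le> s" and "s \<le> n"
    and "is_rgraph r {0..<s} EQ0" and "is_rgraph r {0..<n} EH"
    and "num_copies {0..<s} EQ0 {0..<n} EH > 0"
  shows "\<forall>p q :: real. 1 \<le> p \<longrightarrow> p \<le> q \<longrightarrow>
      (lambda_p q s EQ0 n EH / (fact s * real (num_copies {0..<s} EQ0 {0..<n} EH))) powr q
      \<le> (lambda_p p s EQ0 n EH / (fact s * real (num_copies {0..<s} EQ0 {0..<n} EH))) powr p"
proof (intro allI impI)
  fix p q :: real assume p1: "1 \<le> p" and pq: "p \<le> q"
  have s2: "2 \<le> s" using assms(1,2) by simp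
  have n0: "0 < n" using s2 assms(3) by simp
  define N where "N = real (num_copies {0..<s} EQ0 {0..<n} EH)"
  define C where "C = fact s * N"
  have Np: "0 < N" using assms(6) unfolding N_def by simp
  have Cp: "0 < C" unfolding C_def using Np by simp
  define II where "II = {I. I \<subseteq> {0..<n} \<and> card I = s}"
  define c where "c = (\<lambda>I. real (num_copies {0..<s} EQ0 I (induced_edges EH I)))"
  have PQH_eq: "PQH s EQ0 n EH x = fact s * (\<Sum>I\<in>II. c I * (\<Prod>i\<in>I. x i))" for x
    unfolding PQH_def II_def c_def ..
  have finII: "finite II" unfolding II_def by (rule fin_I)
  have sumc: "(\<Sum>I\<in>II. c I / N) \<le> 1"
    using sum_copies[OF assms(6)] Np unfolding II_def c_def N_def
    by (simp add: sum_divide_distrib[symmetric])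
  define L where "L = lambda_p p s EQ0 n EH"
  define t where "t = q / p"
  have t1: "1 \<le> t" unfolding t_def using p1 pq by simp
  have tp: "t * p = q" unfolding t_def using p1 by simp
  have key: "PQH s EQ0 n EH y \<le> C * (L / C) powr (1 / t)" if y: "pnorm q n y = 1" for y
  proof -
    define z where "z = (\<lambda>i. \<bar>y i\<bar> powr t)"
    have "(\<Sum>i<n. \<bar>y i\<bar> powr q) = 1" using pnorm_one(1)[OF y] p1 pq by simp
    hence "pnorm p n z = 1" unfolding pnorm_def z_def using tp
      by (simp add: powr_powr)
    hence PzL: "PQH s EQ0 n EH z \<le> L" unfolding L_def lambda_p_def using p1
      by (intro cSUP_upper bdd) auto
    define m where "m = (\<Sum>I\<in>II. c I / N * (\<Prod>i\<in>I. \<bar>y i\<bar>))"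
    have m0: "0 \<le> m" unfolding m_def c_def using Np by (intro sum_nonneg mult_nonneg_nonneg prod_nonneg) auto
    have "m powr t \<le> (\<Sum>I\<in>II. c I / N * (\<Prod>i\<in>I. \<bar>y i\<bar>) powr t)"
      unfolding m_def using finII sumc t1 Np
      by (intro jensen_sub) (auto simp: c_def intro: prod_nonneg)
    also have "\<dots> = PQH s EQ0 n EH z / C"
      unfolding PQH_eq C_def z_def using Np
      by (simp add: prod_powr_distrib sum_divide_distrib sum_distrib_left)
    also have "\<dots> \<le> L / C" using PzL Cp by (simp add: divide_right_mono)
    finally have mt: "m powr t \<le> L / C" .
    have "m = (m powr t) powr (1 / t)" using m0 t1 by (simp add: powr_powr)
    also have "\<dots> \<le> (L / C) powr (1 / t)" using mt t1 by (intro powr_mono2) auto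
    finally have mle: "m \<le> (L / C) powr (1 / t)" .
    have "PQH s EQ0 n EH y \<le> PQH s EQ0 n EH (\<lambda>i. \<bar>y i\<bar>)" by (rule PQH_abs)
    also have "\<dots> = C * m" unfolding PQH_eq C_def m_def using Np
      by (simp add: sum_distrib_left)
    also have "\<dots> \<le> C * (L / C) powr (1 / t)" using mle Cp by simp
    finally show ?thesis .
  qed
  have lq: "lambda_p q s EQ0 n EH \<le> C * (L / C) powr (1 / t)"
    unfolding lambda_p_def using e0_norm[of q n] n0 p1 pq
    by (intro cSUP_least key) auto
  have lq0: "0 \<le> lambda_p q s EQ0 n EH" using lambda_nonneg[of q s n] p1 pq s2 assms(3) by simp
  have L0: "0 \<le> L" unfolding L_def using lambda_nonneg[of p s n] p1 s2 assms(3) by simp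
  have "lambda_p q s EQ0 n EH / C \<le> (L / C) powr (1 / t)" using lq Cp by (simp add: field_simps)
  hence "(lambda_p q s EQ0 n EH / C) powr q \<le> ((L / C) powr (1 / t)) powr q"
    using lq0 Cp p1 pq by (intro powr_mono2) auto
  also have "\<dots> = (L / C) powr p"
  proof -
    have "1 / t * q = p" using tp t1 by (simp add: field_simps)
    thus ?thesis by (simp add: powr_powr)
  qed
  finally show "(lambda_p q s EQ0 n EH / (fact s * real (num_copies {0..<s} EQ0 {0..<n} EH))) powr q
      \<le> (lambda_p p s EQ0 n EH / (fact s * real (num_copies {0..<s} EQ0 {0..<n} EH))) powr p"
    unfolding C_def N_def L_def .
qed

end
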